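(* Let $\alpha,a,b>0$ with $\alpha\le a<2\alpha$ and $ab\in\left[\frac{M-1}{M},\frac{M}{M+1}\right[$ for some integer $M\ge2$, and let $\kappa$ be the largest integer with $(1-ab)\kappa\le b\alpha$. Let $h:\mathbb{R}\to\mathbb{C}$ satisfy $h(x)=0$ for all $$x\notin -\Big(\bigcup_{k=1}^{\kappa}\big[\tfrac{k}{b},ak+\alpha\big]\Big)\cup[-\alpha,\alpha]\cup\bigcup_{k=1}^{\kappa}\big[\tfrac{k}{b},ak+\alpha\big],$$ where $-S=\{-s:s\in S\}$ and an empty union is empty. Then: (a) $h(x)=h(x+a)=0$ for every $n\in\{1,\dots,\kappa\}$ and $x\in\,]\alpha+a(n-1),\frac{n}{b}[$, and for every $n\in\{-1,\dots,-\kappa\}$ and $x\in\,]\frac{n}{b}-a,an-\alpha[$; (b) $h(x)=h(x+a)=0$ for every $n\in\{\pm(\kappa+1),\dots,\pm(M-1)\}$ and $x\in[\frac{n}{b}-a,\frac{n}{b}]$. *)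

theory Defs
  imports Complex_Main
begin

definition pos_part :: "real \<Rightarrow> real \<Rightarrow> real \<Rightarrow> int \<Rightarrow> real set" where
  "pos_part \<alpha> a b \<kappa> = (\<Union>k\<in>{1..\<kappa>}. {real_of_int k / b .. a * real_of_int k + \<alpha>})"

definition supp_set :: "real \<Rightarrow> real \<Rightarrow> real \<Rightarrow> int \<Rightarrow> real set" where
  "supp_set \<alpha> a b \<kappa> = uminus ` pos_part \<alpha> a b \<kappa> \<union> {-\<alpha>..\<alpha>} \<union> pos_part \<alpha> a b \<kappa>"

end

theory Submission
  imports Defs
begin

lemma supp_mem:
  "x \<in> supp_set \<alpha> a b \<kappa> \<longleftrightarrow>
    (\<exists>k\<in>{1..\<kappa>}. real_of_int k / b \<le> -x \<and> -x \<le> a * real_of_int k + \<alpha>) \<or> (-\<alpha> \<le> x \<and> x \<le> \<alpha>) \<or>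
    (\<exists>k\<in>{1..\<kappa>}. real_of_int k / b \<le> x \<and> x \<le> a * real_of_int k + \<alpha>)"
proof -
  have "x \<in> uminus ` (\<Union>k\<in>{1..\<kappa>}. {real_of_int k / b .. a * real_of_int k + \<alpha>}) \<longleftrightarrow>
        -x \<in> (\<Union>k\<in>{1..\<kappa>}. {real_of_int k / b .. a * real_of_int k + \<alpha>})"
    by (metis (no_types, lifting) image_iff minus_minus)
  thus ?thesis unfolding supp_set_def pos_part_def by auto
qed

theorem lemma3p3:
  fixes \<alpha> a b :: real and M \<kappa> :: int and h :: "real \<Rightarrow> complex"
  assumes "\<alpha> > 0" "a > 0" "b > 0"
    and "\<alpha> \<le> a" "a < 2 * \<alpha>"
    and "M \<ge> 2"
    and "(real_of_int M - 1) / real_of_int M \<le> a * b" "a * b < real_of_int M / (real_of_int M + 1)"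
    and "(1 - a * b) * real_of_int \<kappa> \<le> b * \<alpha>"
    and "\<forall>k::int. (1 - a * b) * real_of_int k \<le> b * \<alpha> \<longrightarrow> k \<le> \<kappa>"
    and "\<forall>x. x \<notin> supp_set \<alpha> a b \<kappa> \<longrightarrow> h x = 0"
  shows "(\<forall>n\<in>{1..\<kappa>}. \<forall>x\<in>{\<alpha> + a * (real_of_int n - 1) <..< real_of_int n / b}.
             h x = 0 \<and> h (x + a) = 0)
       \<and> (\<forall>n\<in>{-\<kappa>..-1}. \<forall>x\<in>{real_of_int n / b - a <..< a * real_of_int n - \<alpha>}.
             h x = 0 \<and> h (x + a) = 0)
       \<and> (\<forall>n\<in>{\<kappa>+1..M-1} \<union> {-(M-1)..-(\<kappa>+1)}. \<forall>x\<in>{real_of_int n / b - a .. real_of_int n / b}.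
             h x = 0 \<and> h (x + a) = 0)"
proof -
  have Mpos: "real_of_int M + 1 > 0" using assms(6) by simp
  have ab1: "a * b < 1"
  proof -
    have "real_of_int M / (real_of_int M + 1) < 1" using Mpos by simp
    thus ?thesis using assms(8) by linarith
  qed
  have F1: "\<And>k n::int. k \<le> n \<Longrightarrow> a * real_of_int k \<le> a * real_of_int n"
    using assms(2) by (simp add: mult_left_mono)
  have F2: "\<And>k n::int. k \<le> n \<Longrightarrow> real_of_int k / b \<le> real_of_int n / b"
    using assms(3) by (simp add: divide_right_mono)
  have F3: "\<And>k::int. real_of_int k / b + a \<le> (real_of_int k + 1) / b"
  proof -
    fix k :: int
    have "a \<le> 1 / b" using ab1 assms(3) by (simp add: field_simps)
    thus "real_of_int k / b + a \<le> (real_of_int k + 1) / b" by (simp add: add_divide_distrib)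
  qed
  have F4: "\<And>k::int. k \<ge> \<kappa> + 1 \<Longrightarrow> real_of_int k / b > a * real_of_int k + \<alpha>"
  proof -
    fix k :: int assume "k \<ge> \<kappa> + 1"
    hence "\<not> (1 - a * b) * real_of_int k \<le> b * \<alpha>" using assms(10) by force
    hence "b * (a * real_of_int k + \<alpha>) < real_of_int k" by (simp add: algebra_simps)
    thus "real_of_int k / b > a * real_of_int k + \<alpha>" using assms(3) by (simp add: field_simps)
  qed
  have F5: "\<And>k::int. k \<ge> 1 \<Longrightarrow> real_of_int k / b > 0" using assms(3) by simp
  have F6: "\<And>k y. 1 \<le> k \<Longrightarrow> real_of_int k / b \<le> y \<Longrightarrow> y > 0"
    using F5 by (meson less_le_trans)
  have F7: "\<And>k y. k \<in> {1..\<kappa>} \<Longrightarrow> real_of_int k / b \<le> y \<Longrightarrow> 0 < y"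
    using F6 by auto
  have Z: "\<And>x. \<lbrakk>\<And>k. k\<in>{1..\<kappa>} \<Longrightarrow> \<not>(real_of_int k / b \<le> -x \<and> -x \<le> a * real_of_int k + \<alpha>);
              \<not>(-\<alpha> \<le> x \<and> x \<le> \<alpha>);
              \<And>k. k\<in>{1..\<kappa>} \<Longrightarrow> \<not>(real_of_int k / b \<le> x \<and> x \<le> a * real_of_int k + \<alpha>)\<rbrakk> \<Longrightarrow> h x = 0"
    using assms(11) supp_mem by blast
  have A: "h x = 0 \<and> h (x + a) = 0" if n: "n\<in>{1..\<kappa>}" and x: "x\<in>{\<alpha> + a * (real_of_int n - 1) <..< real_of_int n / b}" for n x
  proof
    have x1: "x > \<alpha>" using x F1[of 1 n] n by (auto simp: algebra_simps)
    show "h x = 0"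
    proof (rule Z)
      fix k assume k: "k \<in> {1..\<kappa>}"
      show "\<not>(real_of_int k / b \<le> x \<and> x \<le> a * real_of_int k + \<alpha>)"
      proof (cases "k \<le> n - 1")
        case True thus ?thesis using F1[OF True] x by auto
      next
        case False hence "n \<le> k" by simp
        thus ?thesis using F2[of n k] x by auto
      qed
    qed (use x1 assms(1) F6 in \<open>force+\<close>)
    show "h (x + a) = 0"
    proof (rule Z)
      fix k assume k: "k \<in> {1..\<kappa>}"
      show "\<not>(real_of_int k / b \<le> x + a \<and> x + a \<le> a * real_of_int k + \<alpha>)"
      proof (cases "k \<le> n")
        case True thus ?thesis using F1[OF True] x by (auto simp: algebra_simps)
      next
        case False hence "n + 1 \<le> k" by simp
        thus ?thesis using F2[of "n+1" k] F3[of n] x by auto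
      qed
    qed (use x1 assms(1,2) F6 in \<open>force, linarith\<close>)
  qed
  have B: "h x = 0 \<and> h (x + a) = 0" if n: "n\<in>{-\<kappa>..-1}" and x: "x\<in>{real_of_int n / b - a <..< a * real_of_int n - \<alpha>}" for n x
  proof
    define m where "m = -n"
    have m: "m \<in> {1..\<kappa>}" using n m_def by auto
    have xm: "- real_of_int m / b - a < x" "x < - a * real_of_int m - \<alpha>" using x m_def by auto
    have am: "a * real_of_int m \<ge> a" using F1[of 1 m] m by auto
    have xa: "x < -\<alpha>" "x + a < -\<alpha>" using xm am assms(1,2) by linarith+
    show "h x = 0"
    proof (rule Z)
      fix k assume k: "k \<in> {1..\<kappa>}"
      show "\<not>(real_of_int k / b \<le> -x \<and> -x \<le> a * real_of_int k + \<alpha>)"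
      proof (cases "k \<le> m")
        case True thus ?thesis using F1[OF True] xm by auto
      next
        case False hence "m + 1 \<le> k" by simp
        thus ?thesis using F2[of "m+1" k] F3[of m] xm by auto
      qed
    qed (use xa xm assms(1,2) F6 in \<open>auto dest: F6\<close>)
    show "h (x + a) = 0"
    proof (rule Z)
      fix k assume k: "k \<in> {1..\<kappa>}"
      show "\<not>(real_of_int k / b \<le> -(x + a) \<and> -(x + a) \<le> a * real_of_int k + \<alpha>)"
      proof (cases "k \<le> m - 1")
        case True thus ?thesis using F1[OF True] xm by (auto simp: algebra_simps)
      next
        case False hence "m \<le> k" by simp
        thus ?thesis using F2[of m k] xm by auto
      qed
    qed (use xa xm assms(1,2) F6 in \<open>auto dest: F6 simp: algebra_simps\<close>)
  qed
  have C1: "h x = 0 \<and> h (x + a) = 0" if n: "n\<in>{\<kappa>+1..M-1}" and x: "x\<in>{real_of_int n / b - a .. real_of_int n / b}" for n x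
  proof -
    have k0: "\<kappa> \<ge> 0" using assms(10)[rule_format, of 0] assms(1,3) by simp
    have n4: "real_of_int n / b > a * real_of_int n + \<alpha>" using F4 n by auto
    have an: "a * real_of_int n \<ge> a" using F1[of 1 n] n k0 by auto
    have xb: "real_of_int n / b - a \<le> x" using x by auto
    have xa: "x > \<alpha>" "x + a > \<alpha>" using xb n4 an assms(1,2) by linarith+
    have G: "\<And>k. k\<in>{1..\<kappa>} \<Longrightarrow> a * real_of_int k + \<alpha> \<le> a * (real_of_int n - 1) + \<alpha>"
      using F1 n by (smt (verit, best) atLeastAtMost_iff of_int_1 of_int_diff)
    have G': "\<forall>k\<in>{1..\<kappa>}. a * real_of_int k + \<alpha> < x \<and> a * real_of_int k + \<alpha> < x + a"
    proof
      fix k assume k: "k \<in> {1..\<kappa>}"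
      have "a * real_of_int k + \<alpha> \<le> a * real_of_int n - a + \<alpha>" using G[OF k] by (simp add: algebra_simps)
      thus "a * real_of_int k + \<alpha> < x \<and> a * real_of_int k + \<alpha> < x + a" using xb n4 assms(2) by linarith
    qed
    show ?thesis
    proof
      show "h (x) = 0"
      proof (rule Z)
        fix k assume k: "k \<in> {1..\<kappa>}"
        show "\<not>(real_of_int k / b \<le> -(x) \<and> -(x) \<le> a * real_of_int k + \<alpha>)" using F6[of k "-(x)"] k xa assms(1) by auto
      next
        show "\<not>(-\<alpha> \<le> x \<and> x \<le> \<alpha>)" using xa by auto
      next
        fix k assume k: "k \<in> {1..\<kappa>}"
        show "\<not>(real_of_int k / b \<le> x \<and> x \<le> a * real_of_int k + \<alpha>)" using bspec[OF G' k] by auto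
      qed
      show "h (x + a) = 0"
      proof (rule Z)
        fix k assume k: "k \<in> {1..\<kappa>}"
        show "\<not>(real_of_int k / b \<le> -(x + a) \<and> -(x + a) \<le> a * real_of_int k + \<alpha>)" using F6[of k "-(x + a)"] k xa assms(1) by auto
      next
        show "\<not>(-\<alpha> \<le> x + a \<and> x + a \<le> \<alpha>)" using xa by auto
      next
        fix k assume k: "k \<in> {1..\<kappa>}"
        show "\<not>(real_of_int k / b \<le> x + a \<and> x + a \<le> a * real_of_int k + \<alpha>)" using bspec[OF G' k] by auto
      qed
    qed
  qed
  have C2: "h x = 0 \<and> h (x + a) = 0" if n: "n\<in>{-(M-1)..-(\<kappa>+1)}" and x: "x\<in>{real_of_int n / b - a .. real_of_int n / b}" for n x
  proof -
    define m where "m = -n"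
    have k0: "\<kappa> \<ge> 0" using assms(10)[rule_format, of 0] assms(1,3) by simp
    have m: "m \<ge> \<kappa> + 1" using n m_def by auto
    have xm: "- real_of_int m / b - a \<le> x" "x \<le> - real_of_int m / b" using x m_def by auto
    have n4: "real_of_int m / b > a * real_of_int m + \<alpha>" using F4 m by auto
    have an: "a * real_of_int m \<ge> a" using F1[of 1 m] m k0 by auto
    have xa: "x < -\<alpha>" "x + a < -\<alpha>" using xm n4 an assms(1,2) by linarith+
    have G: "\<And>k. k\<in>{1..\<kappa>} \<Longrightarrow> a * real_of_int k + \<alpha> \<le> a * (real_of_int m - 1) + \<alpha>"
      using F1 m by (smt (verit, best) atLeastAtMost_iff of_int_1 of_int_diff)
    have G': "\<forall>k\<in>{1..\<kappa>}. a * real_of_int k + \<alpha> < -x \<and> a * real_of_int k + \<alpha> < -(x + a)"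
    proof
      fix k assume k: "k \<in> {1..\<kappa>}"
      have "a * real_of_int k + \<alpha> \<le> a * real_of_int m - a + \<alpha>" using G[OF k] by (simp add: algebra_simps)
      thus "a * real_of_int k + \<alpha> < -x \<and> a * real_of_int k + \<alpha> < -(x + a)" using xm n4 assms(2) by linarith
    qed
    show ?thesis
    proof
      show "h (x) = 0"
      proof (rule Z)
        fix k assume k: "k \<in> {1..\<kappa>}"
        show "\<not>(real_of_int k / b \<le> -(x) \<and> -(x) \<le> a * real_of_int k + \<alpha>)" using bspec[OF G' k] by auto
      next
        show "\<not>(-\<alpha> \<le> x \<and> x \<le> \<alpha>)" using xa by auto
      next
        fix k assume k: "k \<in> {1..\<kappa>}"
        show "\<not>(real_of_int k / b \<le> x \<and> x \<le> a * real_of_int k + \<alpha>)" using F6[of k "x"] k xa assms(1) by auto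
      qed
      show "h (x + a) = 0"
      proof (rule Z)
        fix k assume k: "k \<in> {1..\<kappa>}"
        show "\<not>(real_of_int k / b \<le> -(x + a) \<and> -(x + a) \<le> a * real_of_int k + \<alpha>)" using bspec[OF G' k] by auto
      next
        show "\<not>(-\<alpha> \<le> x + a \<and> x + a \<le> \<alpha>)" using xa by auto
      next
        fix k assume k: "k \<in> {1..\<kappa>}"
        show "\<not>(real_of_int k / b \<le> x + a \<and> x + a \<le> a * real_of_int k + \<alpha>)" using F6[of k "x + a"] k xa assms(1) by auto
      qed
    qed
  qed
  show ?thesis using A B C1 C2 by blast
qed

end
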